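(* Let $n\ge2$, $A=\{a_1,\dots,a_k\}$ finite, and $u_1,\dots,u_n:A\to\mathbb{R}$. In the Bid, Price \& Choose game defined in the context: (i) in every subgame-perfect Nash equilibrium the realized option is efficient (whatever the realization of the random draws), and every efficient option is the realized option of some subgame-perfect Nash equilibrium; (ii) in every subgame-perfect Nash equilibrium, the expected equilibrium payoffs $U^1,\dots,U^n$ satisfy $U^i-U^j=\mathrm{Avg}_i-\mathrm{Avg}_j$ for all $i,j$.
   Context: Players have quasi-linear utilities $u_i(a)+t_i$ and are expected-payoff maximizers. $\mathrm{Avg}_i=\frac1k\sum_l u_i(a_l)$; an option $a$ is efficient if it maximizes $\sum_{i=1}^n u_i(a)$ over $A$. Let $P=\{p\in\mathbb{R}^k:\sum_j p_j=0\}$. The $P^{n-1}\&C$ game with order of players $(\pi_1,\dots,\pi_n)$: $\pi_1$ chooses $p^2\in P$; for $m=2,\dots,n-1$, $\pi_m$, having observed $p^2,\dots,p^m$, chooses $p^{m+1}\in P$; $\pi_n$, having observed all prices, chooses $a\in A$; then $\pi_n$ pays $p^n(a)$ to $\pi_{n-1}$ and each $\pi_m$, $2\le m\le n-1$, pays $p^m(a)$ to $\pi_{m-1}$ and receives $p^{m+1}(a)$ from $\pi_{m+1}$. The Bid, Price \& Choose game: each player simultaneously submits a bid $b_i\ge0$; let $W=\{i:b_i=\max_j b_j\}$; one $i\in W$ is drawn uniformly at random, pays $b_i$ and becomes the first mover $\pi_1$, and every other player receives $b_i/(n-1)$; the order of the remaining players is drawn uniformly at random and made known; then the $P^{n-1}\&C$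 game is played in that order. A subgame-perfect Nash equilibrium is a profile of pure strategies (bids, and history-dependent price/option choices) inducing a Nash equilibrium (in expected payoffs) in every subgame. *)

theory Defs
  imports Main "HOL.Real"
begin

text \<open>Players are 0,...,n-1.  Options form a finite nonempty set A of type 'a.
  u i a is player i's utility for option a.  An order of players is a list
  pi (pi!0 is the first mover pi_1, pi!(n-1) the last mover pi_n).
  The price list ps has entries ps!j = p^(j+2), chosen by pi!j.\<close>

definition Pset :: "'a set \<Rightarrow> ('a \<Rightarrow> real) set" where
  "Pset A = {p. (\<forall>a. a \<notin> A \<longrightarrow> p a = 0) \<and> (\<Sum>a\<in>A. p a) = 0}"

text \<open>A history after the chance move consists
  of the bid profile, the drawn order, and the prices chosen so far.\<close>

record 'a strat =
  sbid :: real
  spr :: "(nat \<Rightarrow> real) \<Rightarrow> nat list \<Rightarrow> ('a \<Rightarrow> real) list \<Rightarrow> ('a \<Rightarrow> real)"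
  sch :: "(nat \<Rightarrow> real) \<Rightarrow> nat list \<Rightarrow> ('a \<Rightarrow> real) list \<Rightarrow> 'a"

definition valid_strat :: "'a set \<Rightarrow> 'a strat \<Rightarrow> bool" where
  "valid_strat A s \<longleftrightarrow> sbid s \<ge> 0
     \<and> (\<forall>b pi ps. spr s b pi ps \<in> Pset A)
     \<and> (\<forall>b pi ps. sch s b pi ps \<in> A)"

definition valid_profile :: "nat \<Rightarrow> 'a set \<Rightarrow> (nat \<Rightarrow> 'a strat) \<Rightarrow> bool" where
  "valid_profile n A \<sigma> \<longleftrightarrow> (\<forall>i<n. valid_strat A (\<sigma> i))"

definition valid_bids :: "nat \<Rightarrow> (nat \<Rightarrow> real) \<Rightarrow> bool" where
  "valid_bids n b \<longleftrightarrow> (\<forall>i. (i < n \<longrightarrow> b i \<ge> 0) \<and> (i \<ge> n \<longrightarrow> b i = 0))"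

definition bids_of :: "nat \<Rightarrow> (nat \<Rightarrow> 'a strat) \<Rightarrow> nat \<Rightarrow> real" where
  "bids_of n \<sigma> = (\<lambda>i. if i < n then sbid (\<sigma> i) else 0)"

definition winners :: "nat \<Rightarrow> (nat \<Rightarrow> real) \<Rightarrow> nat set" where
  "winners n b = {i. i < n \<and> b i = Max (b ` {..<n})}"

definition orders :: "nat \<Rightarrow> nat list set" where
  "orders n = {pi. distinct pi \<and> set pi = {..<n}}"

text \<open>Drawing the winner uniformly from W and then the order of the
  remaining players uniformly is the uniform distribution on this set.\<close>
definition orders_W :: "nat \<Rightarrow> (nat \<Rightarrow> real) \<Rightarrow> nat list set" where
  "orders_W n b = {pi \<in> orders n. hd pi \<in> winners n b}"

definition bid_transfer :: "nat \<Rightarrow> (nat \<Rightarrow> real) \<Rightarrow> nat list \<Rightarrow> nat \<Rightarrow> real" where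
  "bid_transfer n b pi i = (if i = hd pi then - b (hd pi) else b (hd pi) / real (n - 1))"

text \<open>Price p^(j+2) = ps!j is paid (evaluated at the option a) by pi!(j+1)
  to pi!j.\<close>
definition price_transfer ::
  "nat \<Rightarrow> nat list \<Rightarrow> ('a \<Rightarrow> real) list \<Rightarrow> 'a \<Rightarrow> nat \<Rightarrow> real" where
  "price_transfer n pi ps a i =
     (\<Sum>j<n - 1. (if pi ! j = i then (ps ! j) a else 0)
                - (if pi ! (Suc j) = i then (ps ! j) a else 0))"

definition payoff ::
  "nat \<Rightarrow> (nat \<Rightarrow> 'a \<Rightarrow> real) \<Rightarrow> (nat \<Rightarrow> real) \<Rightarrow> nat list \<Rightarrow> ('a \<Rightarrow> real) list
     \<Rightarrow> 'a \<Rightarrow> nat \<Rightarrow> real" where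
  "payoff n u b pi ps a i = u i a + price_transfer n pi ps a i + bid_transfer n b pi i"

fun ext_prices ::
  "(nat \<Rightarrow> 'a strat) \<Rightarrow> (nat \<Rightarrow> real) \<Rightarrow> nat list \<Rightarrow> nat \<Rightarrow> ('a \<Rightarrow> real) list
     \<Rightarrow> ('a \<Rightarrow> real) list" where
  "ext_prices \<sigma> b pi 0 ps = ps"
| "ext_prices \<sigma> b pi (Suc m) ps =
     ext_prices \<sigma> b pi m (ps @ [spr (\<sigma> (pi ! length ps)) b pi ps])"

definition final_prices ::
  "nat \<Rightarrow> (nat \<Rightarrow> 'a strat) \<Rightarrow> (nat \<Rightarrow> real) \<Rightarrow> nat list \<Rightarrow> ('a \<Rightarrow> real) list
     \<Rightarrow> ('a \<Rightarrow> real) list" where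
  "final_prices n \<sigma> b pi ps = ext_prices \<sigma> b pi (n - 1 - length ps) ps"

definition outcome_opt ::
  "nat \<Rightarrow> (nat \<Rightarrow> 'a strat) \<Rightarrow> (nat \<Rightarrow> real) \<Rightarrow> nat list \<Rightarrow> ('a \<Rightarrow> real) list \<Rightarrow> 'a" where
  "outcome_opt n \<sigma> b pi ps = sch (\<sigma> (pi ! (n - 1))) b pi (final_prices n \<sigma> b pi ps)"

definition cont_payoff ::
  "nat \<Rightarrow> (nat \<Rightarrow> 'a \<Rightarrow> real) \<Rightarrow> (nat \<Rightarrow> 'a strat) \<Rightarrow> (nat \<Rightarrow> real) \<Rightarrow> nat list
     \<Rightarrow> ('a \<Rightarrow> real) list \<Rightarrow> nat \<Rightarrow> real" where
  "cont_payoff n u \<sigma> b pi ps i =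
     payoff n u b pi (final_prices n \<sigma> b pi ps) (outcome_opt n \<sigma> b pi ps) i"

definition exp_payoff ::
  "nat \<Rightarrow> (nat \<Rightarrow> 'a \<Rightarrow> real) \<Rightarrow> (nat \<Rightarrow> 'a strat) \<Rightarrow> (nat \<Rightarrow> real) \<Rightarrow> nat \<Rightarrow> real" where
  "exp_payoff n u \<sigma> b i =
     (\<Sum>pi\<in>orders_W n b. cont_payoff n u \<sigma> b pi [] i) / real (card (orders_W n b))"

definition root_payoff ::
  "nat \<Rightarrow> (nat \<Rightarrow> 'a \<Rightarrow> real) \<Rightarrow> (nat \<Rightarrow> 'a strat) \<Rightarrow> nat \<Rightarrow> real" where
  "root_payoff n u \<sigma> i = exp_payoff n u \<sigma> (bids_of n \<sigma>) i"

definition SPE :: "nat \<Rightarrow> 'a set \<Rightarrow> (nat \<Rightarrow> 'a \<Rightarrow> real) \<Rightarrow> (nat \<Rightarrow> 'a strat) \<Rightarrow> bool" where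
  "SPE n A u \<sigma> \<longleftrightarrow> valid_profile n A \<sigma>
     \<and> (\<forall>i<n. \<forall>s. valid_strat A s \<longrightarrow>
          root_payoff n u (\<sigma>(i := s)) i \<le> root_payoff n u \<sigma> i)
     \<and> (\<forall>b. valid_bids n b \<longrightarrow> (\<forall>i<n. \<forall>s. valid_strat A s \<longrightarrow>
          exp_payoff n u (\<sigma>(i := s)) b i \<le> exp_payoff n u \<sigma> b i))
     \<and> (\<forall>b pi ps. valid_bids n b \<and> pi \<in> orders_W n b \<and> set ps \<subseteq> Pset A
          \<and> length ps \<le> n - 1 \<longrightarrow> (\<forall>i<n. \<forall>s. valid_strat A s \<longrightarrow>
          cont_payoff n u (\<sigma>(i := s)) b pi ps i \<le> cont_payoff n u \<sigma> b pi ps i))"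

definition efficient :: "nat \<Rightarrow> 'a set \<Rightarrow> (nat \<Rightarrow> 'a \<Rightarrow> real) \<Rightarrow> 'a \<Rightarrow> bool" where
  "efficient n A u a \<longleftrightarrow> a \<in> A \<and> (\<forall>a'\<in>A. (\<Sum>i<n. u i a') \<le> (\<Sum>i<n. u i a))"

definition realized :: "nat \<Rightarrow> (nat \<Rightarrow> 'a strat) \<Rightarrow> nat list \<Rightarrow> 'a" where
  "realized n \<sigma> pi = outcome_opt n \<sigma> (bids_of n \<sigma>) pi []"

definition avg :: "'a set \<Rightarrow> (nat \<Rightarrow> 'a \<Rightarrow> real) \<Rightarrow> nat \<Rightarrow> real" where
  "avg A u i = (\<Sum>a\<in>A. u i a) / real (card A)"

end

theory Submission
  imports Defs "HOL-Combinatorics.Multiset_Permutations"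
begin


lemma ext_length[simp]: "length (ext_prices \<sigma> b pl m ps) = length ps + m"
  by (induction m arbitrary: ps) auto

lemma ext_add: "ext_prices \<sigma> b pl (j + m) ps = ext_prices \<sigma> b pl m (ext_prices \<sigma> b pl j ps)"
  by (induction j arbitrary: ps) auto

lemma ext_snoc: "ext_prices \<sigma> b pl (Suc m) ps =
   ext_prices \<sigma> b pl m ps @ [spr (\<sigma> (pl ! (length ps + m))) b pl (ext_prices \<sigma> b pl m ps)]"
  using ext_add[of \<sigma> b pl m 1 ps] by simp

lemma ext_prefix: "\<exists>zs. ext_prices \<sigma> b pl m ps = ps @ zs"
  by (induction m arbitrary: ps) (auto, metis append.assoc)

lemma ext_nth_old: "j < length ps \<Longrightarrow> ext_prices \<sigma> b pl m ps ! j = ps ! j"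
  using ext_prefix[of \<sigma> b pl m ps] by (auto simp: nth_append)

lemma ext_nth_new: "ext_prices \<sigma> b pl (Suc m) ps ! length ps = spr (\<sigma> (pl ! length ps)) b pl ps"
  using ext_nth_old[of "length ps" "ps @ [spr (\<sigma> (pl ! length ps)) b pl ps]" \<sigma> b pl m] by simp

lemma ext_cong:
  "(\<And>ps'. length ps \<le> length ps' \<Longrightarrow> length ps' < length ps + m \<Longrightarrow>
      spr (\<sigma>' (pl ! length ps')) b pl ps' = spr (\<sigma> (pl ! length ps')) b pl ps')
   \<Longrightarrow> ext_prices \<sigma>' b pl m ps = ext_prices \<sigma> b pl m ps"
proof (induction m arbitrary: ps)
  case 0 then show ?case by simp
next
  case (Suc m)
  have e: "spr (\<sigma>' (pl ! length ps)) b pl ps = spr (\<sigma> (pl ! length ps)) b pl ps"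
    using Suc.prems by simp
  have "ext_prices \<sigma>' b pl m (ps @ [spr (\<sigma> (pl ! length ps)) b pl ps])
      = ext_prices \<sigma> b pl m (ps @ [spr (\<sigma> (pl ! length ps)) b pl ps])"
    by (rule Suc.IH) (use Suc.prems in auto)
  then show ?case using e by simp
qed

lemma ext_valid:
  assumes "\<And>ps'. length ps \<le> length ps' \<Longrightarrow> length ps' < length ps + m \<Longrightarrow>
      spr (\<sigma> (pl ! length ps')) b pl ps' \<in> P"
    and "set ps \<subseteq> P"
  shows "set (ext_prices \<sigma> b pl m ps) \<subseteq> P"
  using assms
proof (induction m arbitrary: ps)
  case 0 then show ?case by simp
next
  case (Suc m)
  have "set (ext_prices \<sigma> b pl m (ps @ [spr (\<sigma> (pl ! length ps)) b pl ps])) \<subseteq> P"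
    by (rule Suc.IH) (use Suc.prems in auto)
  then show ?case by simp
qed

lemma spr_same_ext:
  "(\<And>j. spr (\<sigma>' j) = spr (\<sigma> j)) \<Longrightarrow> ext_prices \<sigma>' b pl m ps = ext_prices \<sigma> b pl m ps"
  by (rule ext_cong) simp

lemma orders_length: "pl \<in> orders n \<Longrightarrow> length pl = n"
  unfolding orders_def by (metis (mono_tags) card_lessThan distinct_card mem_Collect_eq)

lemma orders_nth: "pl \<in> orders n \<Longrightarrow> j < n \<Longrightarrow> pl ! j < n"
proof -
  assume a: "pl \<in> orders n" "j < n"
  then have "pl ! j \<in> set pl" using orders_length[OF a(1)] by simp
  then show ?thesis using a(1) unfolding orders_def by auto
qed

lemma orders_inj: "pl \<in> orders n \<Longrightarrow> j < n \<Longrightarrow> m < n \<Longrightarrow> (pl ! j = pl ! m) = (j = m)"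
proof -
  assume a: "pl \<in> orders n" "j < n" "m < n"
  have "distinct pl" using a(1) unfolding orders_def by auto
  then show ?thesis using a orders_length[OF a(1)] by (simp add: nth_eq_iff_index_eq)
qed

lemma orders_pos: "pl \<in> orders n \<Longrightarrow> i < n \<Longrightarrow> \<exists>m<n. pl ! m = i"
proof -
  assume a: "pl \<in> orders n" "i < n"
  then have "i \<in> set pl" unfolding orders_def by auto
  then obtain m where "m < length pl" "pl ! m = i" by (auto simp: in_set_conv_nth)
  then show ?thesis using orders_length[OF a(1)] by auto
qed

lemma orders_hd: "pl \<in> orders n \<Longrightarrow> 0 < n \<Longrightarrow> hd pl = pl ! 0"
  using orders_length[of pl n] by (cases pl) auto

lemma price_transfer_pos:
  assumes pl: "pl \<in> orders n" and m: "m < n"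
  shows "price_transfer n pl ps a (pl ! m) =
     (if m < n - 1 then (ps ! m) a else 0) - (if 0 < m then (ps ! (m - 1)) a else 0)"
proof -
  have "price_transfer n pl ps a (pl ! m) =
     (\<Sum>j<n - 1. (if j = m then (ps ! j) a else 0)) - (\<Sum>j<n - 1. (if Suc j = m then (ps ! j) a else 0))"
    unfolding price_transfer_def sum_subtractf
    using orders_inj[OF pl _ m] by (intro arg_cong2[where f="(-)"] sum.cong) auto
  also have "(\<Sum>j<n - 1. (if j = m then (ps ! j) a else 0)) = (if m < n - 1 then (ps ! m) a else 0)"
    by (simp add: sum.delta')
  also have "(\<Sum>j<n - 1. (if Suc j = m then (ps ! j) a else 0)) = (\<Sum>j<n - 1. (if j = m - 1 \<and> 0 < m then (ps ! j) a else 0))"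
    by (intro sum.cong) auto
  also have "\<dots> = (if 0 < m then (ps ! (m - 1)) a else 0)"
    using m by (cases "0 < m") (auto simp: sum.delta')
  finally show ?thesis .
qed



definition lp :: "('a \<Rightarrow> real) list \<Rightarrow> 'a \<Rightarrow> real" where
  "lp ps = (if ps = [] then (\<lambda>_. 0) else last ps)"

locale bpc =
  fixes n :: nat and A :: "'a set" and u :: "nat \<Rightarrow> 'a \<Rightarrow> real"
  assumes n2: "2 \<le> n" and finA: "finite A" and neA: "A \<noteq> {}"
begin

definition T :: "nat list \<Rightarrow> nat \<Rightarrow> 'a \<Rightarrow> real" where
  "T pl L x = (\<Sum>l\<in>{L..<n}. u (pl ! l) x)"

definition S :: "nat list \<Rightarrow> nat \<Rightarrow> real" where
  "S pl L = (\<Sum>l\<in>{Suc L..<n}. avg A u (pl ! l))"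

definition canon :: "nat list \<Rightarrow> nat \<Rightarrow> 'a \<Rightarrow> real" where
  "canon pl L = (\<lambda>x. if x \<in> A then T pl (Suc L) x - S pl L else 0)"

lemma cardA: "0 < card A" using finA neA by (simp add: card_gt_0_iff)

lemma sumT1: "(\<Sum>x\<in>A. T pl (Suc L) x) = real (card A) * S pl L"
proof -
  have "(\<Sum>x\<in>A. T pl (Suc L) x) = (\<Sum>l\<in>{Suc L..<n}. \<Sum>x\<in>A. u (pl ! l) x)"
    unfolding T_def by (rule sum.swap)
  also have "\<dots> = (\<Sum>l\<in>{Suc L..<n}. real (card A) * avg A u (pl ! l))"
    using cardA by (intro sum.cong) (auto simp: avg_def)
  finally show ?thesis by (simp add: S_def sum_distrib_left)
qed

lemma canon_P: "canon pl L \<in> Pset A"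
proof -
  have "(\<Sum>x\<in>A. canon pl L x) = (\<Sum>x\<in>A. T pl (Suc L) x - S pl L)"
    by (intro sum.cong) (auto simp: canon_def)
  also have "\<dots> = 0" using sumT1[of pl L] by (simp add: sum_subtractf)
  finally show ?thesis unfolding Pset_def canon_def by auto
qed

lemma Pset_sum: "q \<in> Pset A \<Longrightarrow> (\<Sum>x\<in>A. q x) = 0" by (simp add: Pset_def)

lemma key_ineq:
  assumes q: "q \<in> Pset A" and x: "x \<in> A"
    and mx: "\<forall>y\<in>A. T pl (Suc L) y - q y \<le> T pl (Suc L) x - q x"
  shows "q x \<le> T pl (Suc L) x - S pl L"
proof -
  have "(\<Sum>y\<in>A. T pl (Suc L) y - q y) \<le> real (card A) * (T pl (Suc L) x - q x)"
    using mx by (intro sum_bounded_above) auto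
  moreover have "(\<Sum>y\<in>A. T pl (Suc L) y - q y) = real (card A) * S pl L"
    using sumT1[of pl L] Pset_sum[OF q] by (simp add: sum_subtractf)
  ultimately have "real (card A) * S pl L \<le> real (card A) * (T pl (Suc L) x - q x)" by simp
  then have "S pl L \<le> T pl (Suc L) x - q x" using cardA by simp
  then show ?thesis by simp
qed

lemma key_eq:
  assumes q: "q \<in> Pset A" and x: "x \<in> A"
    and mx: "\<forall>y\<in>A. T pl (Suc L) y - q y \<le> T pl (Suc L) x - q x"
    and eq: "q x = T pl (Suc L) x - S pl L"
  shows "\<forall>y\<in>A. T pl (Suc L) y - q y = S pl L"
proof -
  define g where "g y = S pl L - (T pl (Suc L) y - q y)" for y
  have g0: "\<And>y. y \<in> A \<Longrightarrow> 0 \<le> g y" using mx eq by (auto simp: g_def)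
  have "(\<Sum>y\<in>A. g y) = real (card A) * S pl L - (\<Sum>y\<in>A. T pl (Suc L) y - q y)"
    by (simp add: g_def sum_subtractf)
  also have "(\<Sum>y\<in>A. T pl (Suc L) y - q y) = real (card A) * S pl L"
    using sumT1[of pl L] Pset_sum[OF q] by (simp add: sum_subtractf)
  finally have "(\<Sum>y\<in>A. g y) = 0" by simp
  then have "\<forall>y\<in>A. g y = 0" using sum_nonneg_eq_0_iff[OF finA, of g] g0 by blast
  then show ?thesis by (auto simp: g_def)
qed

lemma T_step: "L < n \<Longrightarrow> T pl L x = u (pl ! L) x + T pl (Suc L) x"
  unfolding T_def by (simp add: sum.atLeast_Suc_lessThan)

lemma T_last: "T pl (n - 1) x = u (pl ! (n - 1)) x"
proof -
  have "{n - 1..<n} = {n - 1}" using n2 by auto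
  then show ?thesis by (simp add: T_def)
qed

lemma S_step: "Suc L < n \<Longrightarrow> S pl L = avg A u (pl ! Suc L) + S pl (Suc L)"
  unfolding S_def by (simp add: sum.atLeast_Suc_lessThan)

lemma S_last: "S pl (n - 1) = 0"
  using n2 by (simp add: S_def)

lemma sum_orders: "pl \<in> orders n \<Longrightarrow> (\<Sum>l\<in>{0..<n}. f (pl ! l)) = (\<Sum>i<n. f i)"
proof -
  assume pl: "pl \<in> orders n"
  have "bij_betw ((!) pl) {..<n} {..<n}"
    using pl orders_length[OF pl] unfolding orders_def by (intro bij_betw_nth) auto
  then have "(\<Sum>l\<in>{..<n}. f (pl ! l)) = (\<Sum>i<n. f i)" by (rule sum.reindex_bij_betw)
  then show ?thesis by (simp add: atLeast0LessThan)
qed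

lemma T0: "pl \<in> orders n \<Longrightarrow> T pl 0 x = (\<Sum>i<n. u i x)"
  unfolding T_def by (rule sum_orders)

lemma S0: "pl \<in> orders n \<Longrightarrow> S pl 0 = (\<Sum>i<n. avg A u i) - avg A u (hd pl)"
proof -
  assume pl: "pl \<in> orders n"
  have "(\<Sum>i<n. avg A u i) = (\<Sum>l\<in>{0..<n}. avg A u (pl ! l))" using sum_orders[OF pl, of "avg A u"] by simp
  also have "\<dots> = avg A u (pl ! 0) + S pl 0" using n2 unfolding S_def
    by (simp add: sum.atLeast_Suc_lessThan)
  finally show ?thesis using orders_hd[OF pl] n2 by simp
qed

end


context bpc begin

lemma fin_len: "length ps \<le> n - 1 \<Longrightarrow> length (final_prices n \<sigma> b pl ps) = n - 1"
  by (simp add: final_prices_def)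

lemma fin_step: "length ps < n - 1 \<Longrightarrow>
   final_prices n \<sigma> b pl ps = final_prices n \<sigma> b pl (ps @ [spr (\<sigma> (pl ! length ps)) b pl ps])"
proof -
  assume a: "length ps < n - 1"
  then have "n - 1 - length ps = Suc (n - 1 - length (ps @ [spr (\<sigma> (pl ! length ps)) b pl ps]))" by simp
  then show ?thesis unfolding final_prices_def by simp
qed

lemma out_step: "length ps < n - 1 \<Longrightarrow>
   outcome_opt n \<sigma> b pl ps = outcome_opt n \<sigma> b pl (ps @ [spr (\<sigma> (pl ! length ps)) b pl ps])"
  unfolding outcome_opt_def using fin_step by metis

lemma cont_step: "length ps < n - 1 \<Longrightarrow>
   cont_payoff n u \<sigma> b pl ps i = cont_payoff n u \<sigma> b pl (ps @ [spr (\<sigma> (pl ! length ps)) b pl ps]) i"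
  unfolding cont_payoff_def using fin_step out_step by metis

lemma fin_shift: "length ps + j \<le> n - 1 \<Longrightarrow>
   final_prices n \<sigma> b pl ps = final_prices n \<sigma> b pl (ext_prices \<sigma> b pl j ps)"
proof -
  assume a: "length ps + j \<le> n - 1"
  then have "n - 1 - length ps = j + (n - 1 - length (ext_prices \<sigma> b pl j ps))" by simp
  then show ?thesis unfolding final_prices_def by (simp add: ext_add)
qed

lemma out_shift: "length ps + j \<le> n - 1 \<Longrightarrow>
   outcome_opt n \<sigma> b pl ps = outcome_opt n \<sigma> b pl (ext_prices \<sigma> b pl j ps)"
  unfolding outcome_opt_def using fin_shift by metis

lemma cont_shift: "length ps + j \<le> n - 1 \<Longrightarrow>
   cont_payoff n u \<sigma> b pl ps i = cont_payoff n u \<sigma> b pl (ext_prices \<sigma> b pl j ps) i"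
  unfolding cont_payoff_def using fin_shift out_shift by metis

lemma fin_nth_old: "j < length ps \<Longrightarrow> final_prices n \<sigma> b pl ps ! j = ps ! j"
  unfolding final_prices_def by (rule ext_nth_old)

lemma fin_nth_new: "length ps < n - 1 \<Longrightarrow>
   final_prices n \<sigma> b pl ps ! length ps = spr (\<sigma> (pl ! length ps)) b pl ps"
  using fin_step[of ps \<sigma> b pl] fin_nth_old[of "length ps" "ps @ [spr (\<sigma> (pl ! length ps)) b pl ps]" \<sigma> b pl]
  by simp

lemma fin_full: "length ps = n - 1 \<Longrightarrow> final_prices n \<sigma> b pl ps = ps"
  by (simp add: final_prices_def)

lemma valid_spr: "valid_profile n A \<sigma> \<Longrightarrow> i < n \<Longrightarrow> spr (\<sigma> i) b pl ps \<in> Pset A"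
  unfolding valid_profile_def valid_strat_def by blast

lemma valid_sch: "valid_profile n A \<sigma> \<Longrightarrow> i < n \<Longrightarrow> sch (\<sigma> i) b pl ps \<in> A"
  unfolding valid_profile_def valid_strat_def by blast

lemma out_in_A: "valid_profile n A \<sigma> \<Longrightarrow> pl \<in> orders n \<Longrightarrow> outcome_opt n \<sigma> b pl ps \<in> A"
  unfolding outcome_opt_def using n2 by (intro valid_sch orders_nth) auto

lemma ext_P: "valid_profile n A \<sigma> \<Longrightarrow> pl \<in> orders n \<Longrightarrow> set ps \<subseteq> Pset A \<Longrightarrow>
   length ps + j \<le> n - 1 \<Longrightarrow> set (ext_prices \<sigma> b pl j ps) \<subseteq> Pset A"
  by (rule ext_valid) (auto intro!: valid_spr orders_nth)

lemma lp_last: "ps \<noteq> [] \<Longrightarrow> lp ps = ps ! (length ps - 1)"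
  by (simp add: lp_def last_conv_nth)

lemma own:
  assumes pl: "pl \<in> orders n" and L: "length ps = L" "L \<le> n - 1"
  shows "cont_payoff n u \<sigma> b pl ps (pl ! L) =
     u (pl ! L) (outcome_opt n \<sigma> b pl ps) - lp ps (outcome_opt n \<sigma> b pl ps)
     + (if L < n - 1 then spr (\<sigma> (pl ! L)) b pl ps (outcome_opt n \<sigma> b pl ps) else 0)
     + bid_transfer n b pl (pl ! L)"
proof -
  let ?o = "outcome_opt n \<sigma> b pl ps" and ?f = "final_prices n \<sigma> b pl ps"
  have Ln: "L < n" using L n2 by simp
  have pt: "price_transfer n pl ?f ?o (pl ! L) =
     (if L < n - 1 then (?f ! L) ?o else 0) - (if 0 < L then (?f ! (L - 1)) ?o else 0)"
    by (rule price_transfer_pos[OF pl Ln])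
  have a1: "(if L < n - 1 then (?f ! L) ?o else 0) = (if L < n - 1 then spr (\<sigma> (pl ! L)) b pl ps ?o else 0)"
    using fin_nth_new[of ps \<sigma> b pl] L by auto
  have a2: "(if 0 < L then (?f ! (L - 1)) ?o else 0) = lp ps ?o"
    using fin_nth_old[of "L - 1" ps \<sigma> b pl] L lp_last[of ps] by (auto simp: lp_def)
  show ?thesis unfolding cont_payoff_def payoff_def using pt a1 a2 by simp
qed

lemma own_prev:
  assumes pl: "pl \<in> orders n" and L: "length ps = L" "L < n - 1"
  shows "cont_payoff n u \<sigma> b pl (ps @ [q]) (pl ! L) =
     u (pl ! L) (outcome_opt n \<sigma> b pl (ps @ [q])) - lp ps (outcome_opt n \<sigma> b pl (ps @ [q]))
     + q (outcome_opt n \<sigma> b pl (ps @ [q])) + bid_transfer n b pl (pl ! L)"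
proof -
  let ?o = "outcome_opt n \<sigma> b pl (ps @ [q])" and ?f = "final_prices n \<sigma> b pl (ps @ [q])"
  have Ln: "L < n" using L n2 by simp
  have pt: "price_transfer n pl ?f ?o (pl ! L) =
     (if L < n - 1 then (?f ! L) ?o else 0) - (if 0 < L then (?f ! (L - 1)) ?o else 0)"
    by (rule price_transfer_pos[OF pl Ln])
  have a1: "?f ! L = q"
    using fin_nth_old[of L "ps @ [q]" \<sigma> b pl] L by (simp add: nth_append)
  have a2: "(if 0 < L then (?f ! (L - 1)) ?o else 0) = lp ps ?o"
    using fin_nth_old[of "L - 1" "ps @ [q]" \<sigma> b pl] L lp_last[of ps] by (auto simp: lp_def nth_append)
  show ?thesis unfolding cont_payoff_def payoff_def using pt a1 a2 L by simp
qed

lemma dev: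
  assumes pl: "pl \<in> orders n" and L: "length ps = L" "L < n - 1"
  shows "cont_payoff n u (\<sigma>(pl ! L := s)) b pl ps j = cont_payoff n u \<sigma> b pl (ps @ [spr s b pl ps]) j"
proof -
  let ?s' = "\<sigma>(pl ! L := s)"
  have f1: "final_prices n ?s' b pl ps = final_prices n ?s' b pl (ps @ [spr s b pl ps])"
    using fin_step[of ps ?s' b pl] L by simp
  have f2: "final_prices n ?s' b pl (ps @ [spr s b pl ps]) = final_prices n \<sigma> b pl (ps @ [spr s b pl ps])"
    unfolding final_prices_def
  proof (rule ext_cong)
    fix ps' :: "('a \<Rightarrow> real) list"
    assume "length (ps @ [spr s b pl ps]) \<le> length ps'"
      "length ps' < length (ps @ [spr s b pl ps]) + (n - 1 - length (ps @ [spr s b pl ps]))"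
    then have "pl ! length ps' \<noteq> pl ! L" using orders_inj[OF pl, of "length ps'" L] L by auto
    then show "spr (?s' (pl ! length ps')) b pl ps' = spr (\<sigma> (pl ! length ps')) b pl ps'" by simp
  qed
  have ne: "pl ! (n - 1) \<noteq> pl ! L" using orders_inj[OF pl, of "n - 1" L] L n2 by auto
  show ?thesis unfolding cont_payoff_def outcome_opt_def using f1 f2 ne by simp
qed

lemma devc:
  assumes pl: "pl \<in> orders n" and L: "length ps = n - 1"
  shows "cont_payoff n u (\<sigma>(pl ! (n - 1) := s)) b pl ps j = payoff n u b pl ps (sch s b pl ps) j"
  unfolding cont_payoff_def outcome_opt_def using fin_full[OF L] by simp

lemma irr:
  assumes pl: "pl \<in> orders n" and m: "m < length ps" and L: "length ps \<le> n - 1"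
  shows "cont_payoff n u (\<sigma>(pl ! m := s)) b pl ps j = cont_payoff n u \<sigma> b pl ps j"
proof -
  let ?s' = "\<sigma>(pl ! m := s)"
  have f2: "final_prices n ?s' b pl ps = final_prices n \<sigma> b pl ps"
    unfolding final_prices_def
  proof (rule ext_cong)
    fix ps' :: "('a \<Rightarrow> real) list"
    assume "length ps \<le> length ps'" "length ps' < length ps + (n - 1 - length ps)"
    then have "pl ! length ps' \<noteq> pl ! m" using orders_inj[OF pl, of "length ps'" m] m L by auto
    then show "spr (?s' (pl ! length ps')) b pl ps' = spr (\<sigma> (pl ! length ps')) b pl ps'" by simp
  qed
  have ne: "pl ! (n - 1) \<noteq> pl ! m" using orders_inj[OF pl, of "n - 1" m] m L n2 by auto
  show ?thesis unfolding cont_payoff_def outcome_opt_def using f2 ne by simp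
qed

lemma reach:
  fixes \<sigma> :: "nat \<Rightarrow> 'a strat" and ps :: "('a \<Rightarrow> real) list"
  assumes pl: "pl \<in> orders n" and m: "length ps \<le> m" "m < n"
  shows "ext_prices (\<sigma>(pl ! m := s)) b pl (m - length ps) ps = ext_prices \<sigma> b pl (m - length ps) ps"
proof (rule ext_cong)
  fix ps' :: "('a \<Rightarrow> real) list"
  assume "length ps \<le> length ps'" "length ps' < length ps + (m - length ps)"
  then have "pl ! length ps' \<noteq> pl ! m" using orders_inj[OF pl, of "length ps'" m] m by auto
  then show "spr ((\<sigma>(pl ! m := s)) (pl ! length ps')) b pl ps' = spr (\<sigma> (pl ! length ps')) b pl ps'" by simp
qed

lemma cong_cont:
  assumes "\<And>j. spr (\<sigma>' j) = spr (\<sigma> j)" "\<And>j. sch (\<sigma>' j) = sch (\<sigma> j)"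
  shows "cont_payoff n u \<sigma>' = cont_payoff n u \<sigma>"
proof -
  have "\<And>b pl ps. final_prices n \<sigma>' b pl ps = final_prices n \<sigma> b pl ps"
    unfolding final_prices_def using spr_same_ext assms(1) by metis
  then show ?thesis using assms(2) unfolding cont_payoff_def outcome_opt_def by (intro ext) simp
qed

lemma cong_exp:
  assumes "\<And>j. spr (\<sigma>' j) = spr (\<sigma> j)" "\<And>j. sch (\<sigma>' j) = sch (\<sigma> j)"
  shows "exp_payoff n u \<sigma>' = exp_payoff n u \<sigma>"
  using cong_cont[OF assms] unfolding exp_payoff_def by simp

end


lemma ex_argmax: "finite X \<Longrightarrow> X \<noteq> {} \<Longrightarrow> \<exists>x\<in>X. \<forall>y\<in>X. (f y :: real) \<le> f x"
proof -
  assume X: "finite X" "X \<noteq> {}"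
  then have "Max (f ` X) \<in> f ` X" by simp
  then obtain x where x: "x \<in> X" "f x = Max (f ` X)" by auto
  have "\<forall>y\<in>X. f y \<le> f x" using x X by simp
  then show ?thesis using x by blast
qed

lemma eps_le:
  fixes x y c :: real
  assumes h: "\<And>e. 0 < e \<Longrightarrow> x - e * c \<le> y" and c: "0 \<le> c"
  shows "x \<le> y"
proof (rule ccontr)
  assume "\<not> x \<le> y"
  then have xy: "0 < x - y" by simp
  define e where "e = (x - y) / (c + 1)"
  have e: "0 < e" using xy c by (simp add: e_def)
  have "e * c < x - y"
  proof -
    have "e * c = (x - y) * (c / (c + 1))" by (simp add: e_def)
    also have "\<dots> < (x - y) * 1" using xy c by (intro mult_strict_left_mono) auto
    finally show ?thesis by simp
  qed
  then show False using h[OF e] by simp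
qed

context bpc begin

definition SG :: "(nat \<Rightarrow> 'a strat) \<Rightarrow> bool" where
  "SG \<sigma> \<longleftrightarrow> (\<forall>b pl ps. valid_bids n b \<and> pl \<in> orders_W n b \<and> set ps \<subseteq> Pset A
          \<and> length ps \<le> n - 1 \<longrightarrow> (\<forall>i<n. \<forall>s. valid_strat A s \<longrightarrow>
          cont_payoff n u (\<sigma>(i := s)) b pl ps i \<le> cont_payoff n u \<sigma> b pl ps i))"

definition good :: "(nat \<Rightarrow> 'a strat) \<Rightarrow> (nat \<Rightarrow> real) \<Rightarrow> nat list \<Rightarrow> ('a \<Rightarrow> real) list \<Rightarrow> bool" where
  "good \<sigma> b pl ps \<longleftrightarrow>
    (\<forall>y\<in>A. T pl (length ps) y - lp ps y \<le> T pl (length ps) (outcome_opt n \<sigma> b pl ps) - lp ps (outcome_opt n \<sigma> b pl ps)) \<and>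
    cont_payoff n u \<sigma> b pl ps (pl ! length ps) = T pl (length ps) (outcome_opt n \<sigma> b pl ps) - lp ps (outcome_opt n \<sigma> b pl ps)
       - S pl (length ps) + bid_transfer n b pl (pl ! length ps) \<and>
    (length ps < n - 1 \<longrightarrow> (\<forall>y\<in>A. T pl (Suc (length ps)) y - spr (\<sigma> (pl ! length ps)) b pl ps y = S pl (length ps)))"

lemma orders_W_orders: "pl \<in> orders_W n b \<Longrightarrow> pl \<in> orders n"
  by (simp add: orders_W_def)

lemma valid_strat_of: "valid_profile n A \<sigma> \<Longrightarrow> i < n \<Longrightarrow> valid_strat A (\<sigma> i)"
  by (simp add: valid_profile_def)

lemma nec:
  assumes sg: "SG \<sigma>" and vp: "valid_profile n A \<sigma>" and vb: "valid_bids n b" and plW: "pl \<in> orders_W n b"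
  shows "\<forall>ps. length ps + k = n - 1 \<longrightarrow> set ps \<subseteq> Pset A \<longrightarrow> good \<sigma> b pl ps"
proof (induction k)
  have pl: "pl \<in> orders n" using plW by (rule orders_W_orders)
  case 0
  show ?case
  proof (intro allI impI)
    fix ps :: "('a \<Rightarrow> real) list"
    assume len: "length ps + 0 = n - 1" and P: "set ps \<subseteq> Pset A"
    let ?L = "n - 1"
    let ?o = "outcome_opt n \<sigma> b pl ps"
    let ?bt = "bid_transfer n b pl (pl ! ?L)"
    have Ln: "?L < n" using n2 by simp
    have ownv: "cont_payoff n u \<sigma> b pl ps (pl ! ?L) = u (pl ! ?L) ?o - lp ps ?o + ?bt"
      using own[OF pl, of ps ?L \<sigma> b] len by simp
    have mx: "\<forall>y\<in>A. u (pl ! ?L) y - lp ps y \<le> u (pl ! ?L) ?o - lp ps ?o"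
    proof
      fix y assume y: "y \<in> A"
      define s where "s = (\<sigma> (pl ! ?L))\<lparr>sch := (\<lambda>_ _ _. y)\<rparr>"
      have vs: "valid_strat A s" using valid_strat_of[OF vp orders_nth[OF pl Ln]] y
        by (simp add: s_def valid_strat_def)
      have "cont_payoff n u (\<sigma>(pl ! ?L := s)) b pl ps (pl ! ?L) \<le> cont_payoff n u \<sigma> b pl ps (pl ! ?L)"
        using sg vb plW P len orders_nth[OF pl Ln] vs unfolding SG_def by auto
      moreover have "outcome_opt n (\<sigma>(pl ! ?L := s)) b pl ps = y"
        by (simp add: outcome_opt_def s_def)
      moreover have "cont_payoff n u (\<sigma>(pl ! ?L := s)) b pl ps (pl ! ?L) =
          u (pl ! ?L) (outcome_opt n (\<sigma>(pl ! ?L := s)) b pl ps) - lp ps (outcome_opt n (\<sigma>(pl ! ?L := s)) b pl ps) + ?bt"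
        using own[OF pl, of ps ?L "\<sigma>(pl ! ?L := s)" b] len by simp
      ultimately show "u (pl ! ?L) y - lp ps y \<le> u (pl ! ?L) ?o - lp ps ?o" using ownv by simp
    qed
    show "good \<sigma> b pl ps" unfolding good_def using len mx ownv T_last S_last by simp
  qed
next
  have pl: "pl \<in> orders n" using plW by (rule orders_W_orders)
  case (Suc k)
  show ?case
  proof (intro allI impI)
    fix ps :: "('a \<Rightarrow> real) list"
    assume len: "length ps + Suc k = n - 1" and P: "set ps \<subseteq> Pset A"
    define L where "L = length ps"
    have L1: "L < n - 1" using len by (simp add: L_def)
    have Ln: "L < n" using L1 by simp
    have iL: "pl ! L < n" using orders_nth[OF pl Ln] .
    define q0 where "q0 = spr (\<sigma> (pl ! L)) b pl ps"
    have q0P: "q0 \<in> Pset A" unfolding q0_def by (rule valid_spr[OF vp iL])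
    let ?o = "outcome_opt n \<sigma> b pl ps"
    let ?bt = "bid_transfer n b pl (pl ! L)"
    have oA: "?o \<in> A" by (rule out_in_A[OF vp pl])
    have o_eq: "?o = outcome_opt n \<sigma> b pl (ps @ [q0])"
      using out_step[of ps \<sigma> b pl] L1 by (simp add: L_def q0_def)
    have IH0: "good \<sigma> b pl (ps @ [q0])" using Suc.IH len P q0P by simp
    have mx0: "\<forall>y\<in>A. T pl (Suc L) y - q0 y \<le> T pl (Suc L) ?o - q0 ?o"
      using IH0 o_eq unfolding good_def by (simp add: L_def lp_def)
    have ownv: "cont_payoff n u \<sigma> b pl ps (pl ! L) = u (pl ! L) ?o - lp ps ?o + q0 ?o + ?bt"
      using own[OF pl, of ps L \<sigma> b] L1 by (simp add: L_def q0_def)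
    have up1: "q0 ?o \<le> T pl (Suc L) ?o - S pl L" by (rule key_ineq[OF q0P oA mx0])
    obtain a where aA: "a \<in> A" and amx: "\<forall>y\<in>A. T pl L y - lp ps y \<le> T pl L a - lp ps a"
      using ex_argmax[OF finA neA, of "\<lambda>y. T pl L y - lp ps y"] by blast
    define M where "M = T pl L a - lp ps a"
    have up: "cont_payoff n u \<sigma> b pl ps (pl ! L) \<le> T pl L ?o - lp ps ?o - S pl L + ?bt"
      using ownv up1 T_step[OF Ln, of pl ?o] by simp
    have up2: "T pl L ?o - lp ps ?o \<le> M" using amx oA by (simp add: M_def)
    have low: "M - S pl L + ?bt \<le> cont_payoff n u \<sigma> b pl ps (pl ! L)"
    proof (rule eps_le[where c = "real (card A) - 1"])
      show "0 \<le> real (card A) - 1" using cardA by simp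
      fix e :: real assume e: "0 < e"
      define d where "d x = (if x = a then real (card A) else 0) - 1" for x
      define qe where "qe x = (if x \<in> A then T pl (Suc L) x - S pl L - e * d x else 0)" for x
      have sd: "(\<Sum>x\<in>A. d x) = 0"
        using aA finA by (simp add: d_def sum_subtractf sum.delta)
      have "(\<Sum>x\<in>A. qe x) = (\<Sum>x\<in>A. T pl (Suc L) x - S pl L) - e * (\<Sum>x\<in>A. d x)"
        by (simp add: qe_def sum_subtractf sum_distrib_left)
      also have "\<dots> = 0" using sd sumT1[of pl L] by (simp add: sum_subtractf)
      finally have qeP: "qe \<in> Pset A" by (simp add: Pset_def qe_def)
      define s where "s = (\<sigma> (pl ! L))\<lparr>spr := (\<lambda>_ _ _. qe)\<rparr>"
      have vs: "valid_strat A s" using valid_strat_of[OF vp iL] qeP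
        by (simp add: s_def valid_strat_def)
      have dv: "cont_payoff n u (\<sigma>(pl ! L := s)) b pl ps (pl ! L) \<le> cont_payoff n u \<sigma> b pl ps (pl ! L)"
        using sg vb plW P len iL vs unfolding SG_def by (auto simp: L_def)
      let ?o' = "outcome_opt n \<sigma> b pl (ps @ [qe])"
      have dv2: "cont_payoff n u (\<sigma>(pl ! L := s)) b pl ps (pl ! L) = u (pl ! L) ?o' - lp ps ?o' + qe ?o' + ?bt"
        using dev[OF pl, of ps L \<sigma> s b "pl ! L"] own_prev[OF pl, of ps L \<sigma> b qe] L1
        by (simp add: L_def s_def)
      have IHe: "good \<sigma> b pl (ps @ [qe])" using Suc.IH len P qeP by simp
      have mxe: "\<forall>y\<in>A. T pl (Suc L) y - qe y \<le> T pl (Suc L) ?o' - qe ?o'"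
        using IHe unfolding good_def by (simp add: L_def lp_def)
      have o'A: "?o' \<in> A" by (rule out_in_A[OF vp pl])
      have o'a: "?o' = a"
      proof (rule ccontr)
        assume ne: "?o' \<noteq> a"
        have "T pl (Suc L) a - qe a \<le> T pl (Suc L) ?o' - qe ?o'" using mxe aA by blast
        moreover have "0 \<le> e * (real (card A) - 1)" using e cardA by (simp add: Suc_leI)
        ultimately show False using ne o'A aA e by (simp add: qe_def d_def)
      qed
      have "cont_payoff n u (\<sigma>(pl ! L := s)) b pl ps (pl ! L) = M - S pl L + ?bt - e * (real (card A) - 1)"
        using dv2 o'a aA T_step[OF Ln, of pl a] by (simp add: qe_def d_def M_def algebra_simps)
      then show "M - S pl L + ?bt - e * (real (card A) - 1) \<le> cont_payoff n u \<sigma> b pl ps (pl ! L)"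
        using dv by simp
    qed
    have eqM: "T pl L ?o - lp ps ?o = M" using up low up2 by simp
    have eqown: "cont_payoff n u \<sigma> b pl ps (pl ! L) = T pl L ?o - lp ps ?o - S pl L + ?bt"
      using up low up2 by simp
    have eqq: "q0 ?o = T pl (Suc L) ?o - S pl L" using eqown ownv T_step[OF Ln, of pl ?o] by simp
    have c3: "\<forall>y\<in>A. T pl (Suc L) y - q0 y = S pl L" by (rule key_eq[OF q0P oA mx0 eqq])
    have c1: "\<forall>y\<in>A. T pl L y - lp ps y \<le> T pl L ?o - lp ps ?o" using amx eqM by (simp add: M_def)
    show "good \<sigma> b pl ps" unfolding good_def using c1 eqown c3 by (simp add: L_def q0_def)
  qed
qed

lemma nec':
  assumes sg: "SG \<sigma>" and vp: "valid_profile n A \<sigma>" and vb: "valid_bids n b" and plW: "pl \<in> orders_W n b"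
    and "set ps \<subseteq> Pset A" "length ps \<le> n - 1"
  shows "good \<sigma> b pl ps"
  using nec[OF sg vp vb plW, of "n - 1 - length ps"] assms(5,6) by simp

end


lemma winners_sub: "winners n b \<subseteq> {..<n}" by (auto simp: winners_def)

lemma winners_fin: "finite (winners n b)" using winners_sub finite_subset by blast

lemma winners_ne: "0 < n \<Longrightarrow> winners n b \<noteq> {}"
proof -
  assume n: "0 < n"
  have "Max (b ` {..<n}) \<in> b ` {..<n}" using n by (intro Max_in) auto
  then obtain i where "i < n" "b i = Max (b ` {..<n})" by auto
  then show ?thesis by (auto simp: winners_def)
qed

lemma orders_W_UN: "0 < n \<Longrightarrow> orders_W n b =
   (\<Union>j\<in>winners n b. (\<lambda>xs. j # xs) ` permutations_of_set ({..<n} - {j}))"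
proof (intro equalityI subsetI)
  fix pl assume n: "0 < n" and pl: "pl \<in> orders_W n b"
  then have po: "pl \<in> orders n" and hw: "hd pl \<in> winners n b" by (auto simp: orders_W_def)
  have "pl \<noteq> []" using orders_length[OF po] n by auto
  then obtain j rest where pj: "pl = j # rest" by (cases pl) auto
  have "rest \<in> permutations_of_set ({..<n} - {j})"
    using po pj unfolding orders_def by (intro permutations_of_setI) auto
  then show "pl \<in> (\<Union>j\<in>winners n b. (\<lambda>xs. j # xs) ` permutations_of_set ({..<n} - {j}))"
    using hw pj by auto
next
  fix pl assume "pl \<in> (\<Union>j\<in>winners n b. (\<lambda>xs. j # xs) ` permutations_of_set ({..<n} - {j}))"
  then obtain j rest where j: "j \<in> winners n b" and r: "rest \<in> permutations_of_set ({..<n} - {j})"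
    and pj: "pl = j # rest" by auto
  have "j < n" using j winners_sub by auto
  then show "pl \<in> orders_W n b" using j r pj permutations_of_setD[OF r]
    by (auto simp: orders_W_def orders_def)
qed

lemma count_sum:
  assumes n: "0 < n"
  shows "(\<Sum>pl\<in>orders_W n b. (g (hd pl) :: real)) = real (fact (n - 1)) * (\<Sum>j\<in>winners n b. g j)"
proof -
  have "(\<Sum>pl\<in>orders_W n b. g (hd pl)) =
      (\<Sum>j\<in>winners n b. \<Sum>pl\<in>(\<lambda>xs. j # xs) ` permutations_of_set ({..<n} - {j}). g (hd pl))"
    unfolding orders_W_UN[OF n] by (rule sum.UNION_disjoint) (auto simp: winners_fin)
  also have "\<dots> = (\<Sum>j\<in>winners n b. real (fact (n - 1)) * g j)"
  proof (rule sum.cong)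
    fix j assume j: "j \<in> winners n b"
    then have jn: "j < n" using winners_sub by auto
    have "(\<Sum>pl\<in>(\<lambda>xs. j # xs) ` permutations_of_set ({..<n} - {j}). g (hd pl)) =
        (\<Sum>xs\<in>permutations_of_set ({..<n} - {j}). g j)"
      by (subst sum.reindex) (auto simp: inj_on_def)
    also have "\<dots> = real (card (permutations_of_set ({..<n} - {j}))) * g j" by simp
    also have "card (permutations_of_set ({..<n} - {j})) = fact (n - 1)" using jn by simp
    finally show "(\<Sum>pl\<in>(\<lambda>xs. j # xs) ` permutations_of_set ({..<n} - {j}). g (hd pl)) = real (fact (n - 1)) * g j" .
  qed simp
  finally show ?thesis by (simp add: sum_distrib_left)
qed

lemma card_OW:
  assumes n: "0 < n"
  shows "real (card (orders_W n b)) = real (fact (n - 1)) * real (card (winners n b))"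
  using count_sum[OF n, where b=b and g="\<lambda>_. 1"] by simp

context bpc begin

definition Wsum :: "'a \<Rightarrow> real" where "Wsum x = (\<Sum>i<n. u i x)"
definition Wmax :: real where "Wmax = Max (Wsum ` A)"
definition TA :: real where "TA = (\<Sum>i<n. avg A u i)"
definition E :: real where "E = Wmax - TA"
definition Bm :: "(nat \<Rightarrow> real) \<Rightarrow> real" where "Bm b = Max (b ` {..<n})"

definition Fm :: "(nat \<Rightarrow> real) \<Rightarrow> nat \<Rightarrow> real" where
  "Fm b i = avg A u i + (if i \<in> winners n b
      then (E - Bm b + (real (card (winners n b)) - 1) * Bm b / real (n - 1)) / real (card (winners n b))
      else Bm b / real (n - 1))"

lemma eff_iff: "efficient n A u x \<longleftrightarrow> x \<in> A \<and> Wsum x = Wmax"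
proof
  assume "efficient n A u x"
  then have x: "x \<in> A" "\<forall>y\<in>A. Wsum y \<le> Wsum x" by (auto simp: efficient_def Wsum_def)
  then show "x \<in> A \<and> Wsum x = Wmax" unfolding Wmax_def using finA
    by (intro conjI antisym Max_ge Max.boundedI) auto
next
  assume x: "x \<in> A \<and> Wsum x = Wmax"
  then show "efficient n A u x" unfolding efficient_def Wsum_def[symmetric] Wmax_def using finA by auto
qed

lemma E_nonneg: "0 \<le> E"
proof -
  have "TA = (\<Sum>i<n. \<Sum>x\<in>A. u i x) / real (card A)"
    unfolding TA_def avg_def by (simp add: sum_divide_distrib)
  also have "(\<Sum>i<n. \<Sum>x\<in>A. u i x) = (\<Sum>x\<in>A. Wsum x)"
    unfolding Wsum_def by (rule sum.swap)
  finally have "TA = (\<Sum>x\<in>A. Wsum x) / real (card A)" .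
  also have "\<dots> \<le> Wmax"
  proof -
    have "sum Wsum A \<le> real (card A) * Wmax"
      by (rule sum_bounded_above) (simp add: Wmax_def finA)
    then show ?thesis using cardA by (simp add: pos_divide_le_eq mult.commute)
  qed
  finally show ?thesis by (simp add: E_def)
qed

lemma goodD1: "good \<sigma> b pl ps \<Longrightarrow> y \<in> A \<Longrightarrow>
   T pl (length ps) y - lp ps y \<le> T pl (length ps) (outcome_opt n \<sigma> b pl ps) - lp ps (outcome_opt n \<sigma> b pl ps)"
  unfolding good_def by (drule conjunct1) (erule bspec)

lemma goodD2: "good \<sigma> b pl ps \<Longrightarrow>
   cont_payoff n u \<sigma> b pl ps (pl ! length ps) = T pl (length ps) (outcome_opt n \<sigma> b pl ps) - lp ps (outcome_opt n \<sigma> b pl ps)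
       - S pl (length ps) + bid_transfer n b pl (pl ! length ps)"
  unfolding good_def by (drule conjunct2) (erule conjunct1)

lemma goodD3: "good \<sigma> b pl ps \<Longrightarrow> length ps < n - 1 \<Longrightarrow> y \<in> A \<Longrightarrow>
   T pl (Suc (length ps)) y - spr (\<sigma> (pl ! length ps)) b pl ps y = S pl (length ps)"
  unfolding good_def by (drule conjunct2, drule conjunct2) blast

lemma winner_bid: "pl \<in> orders_W n b \<Longrightarrow> b (hd pl) = Bm b"
  by (simp add: orders_W_def winners_def Bm_def)

lemma path_payoff:
  assumes sg: "SG \<sigma>" and vp: "valid_profile n A \<sigma>" and vb: "valid_bids n b" and plW: "pl \<in> orders_W n b"
    and i: "i < n"
  shows "cont_payoff n u \<sigma> b pl [] i = avg A u i + (if i = hd pl then E - Bm b else Bm b / real (n - 1))"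
    and "efficient n A u (outcome_opt n \<sigma> b pl [])"
proof -
  have pl: "pl \<in> orders n" using plW by (rule orders_W_orders)
  let ?o = "outcome_opt n \<sigma> b pl []"
  have g0: "good \<sigma> b pl []" using nec'[OF sg vp vb plW, of "[]"] by simp
  have oA: "?o \<in> A" by (rule out_in_A[OF vp pl])
  have mx: "\<forall>y\<in>A. Wsum y \<le> Wsum ?o"
  proof
    fix y assume "y \<in> A"
    from goodD1[OF g0 this] have "T pl 0 y \<le> T pl 0 ?o" by (simp add: lp_def)
    then show "Wsum y \<le> Wsum ?o" by (simp add: T0[OF pl] Wsum_def)
  qed
  then show eff: "efficient n A u ?o" using oA by (simp add: efficient_def Wsum_def)
  have wo: "Wsum ?o = Wmax" using eff eff_iff by simp
  have hd0: "hd pl = pl ! 0" using orders_hd[OF pl] n2 by simp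
  obtain m where m: "m < n" "pl ! m = i" using orders_pos[OF pl i] by blast
  show "cont_payoff n u \<sigma> b pl [] i = avg A u i + (if i = hd pl then E - Bm b else Bm b / real (n - 1))"
  proof (cases "m = 0")
    case True
    have c0: "cont_payoff n u \<sigma> b pl [] (pl ! 0) = T pl 0 ?o - S pl 0 + bid_transfer n b pl (pl ! 0)"
      using goodD2[OF g0] by (simp add: lp_def)
    have t0: "T pl 0 ?o = Wmax" using T0[OF pl, of ?o] wo by (simp add: Wsum_def)
    have s0: "S pl 0 = TA - avg A u i" using S0[OF pl] True m hd0 by (simp add: TA_def)
    have bt: "bid_transfer n b pl (pl ! 0) = - Bm b" using winner_bid[OF plW] hd0 by (simp add: bid_transfer_def)
    have ii: "i = hd pl" "pl ! 0 = i" using True m hd0 by auto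
    have "cont_payoff n u \<sigma> b pl [] i = avg A u i + (E - Bm b)"
      using c0 t0 s0 bt ii by (simp add: E_def)
    then show ?thesis using ii by simp
  next
    case False
    define h where "h = ext_prices \<sigma> b pl m []"
    define h' where "h' = ext_prices \<sigma> b pl (m - 1) []"
    have lh: "length h = m" "length h' = m - 1" by (simp_all add: h_def h'_def)
    have hP: "set h \<subseteq> Pset A" "set h' \<subseteq> Pset A"
      using ext_P[OF vp pl, of "[]" m b] ext_P[OF vp pl, of "[]" "m - 1" b] m by (auto simp: h_def h'_def)
    have gh: "good \<sigma> b pl h" using nec'[OF sg vp vb plW hP(1)] lh m by simp
    have gh': "good \<sigma> b pl h'" using nec'[OF sg vp vb plW hP(2)] lh m by simp
    have c_eq: "cont_payoff n u \<sigma> b pl [] i = cont_payoff n u \<sigma> b pl h i"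
      using cont_shift[of "[]" m \<sigma> b pl i] m by (simp add: h_def)
    have o_eq: "outcome_opt n \<sigma> b pl h = ?o"
      using out_shift[of "[]" m \<sigma> b pl] m by (simp add: h_def)
    have hsn: "h = h' @ [spr (\<sigma> (pl ! (m - 1))) b pl h']"
      using ext_snoc[of \<sigma> b pl "m - 1" "[]"] False by (simp add: h_def h'_def)
    have lph: "lp h = spr (\<sigma> (pl ! (m - 1))) b pl h'" using hsn by (simp add: lp_def)
    have c3: "T pl m ?o - lp h ?o = S pl (m - 1)"
    proof -
      have "length h' < n - 1" using lh False m by simp
      from goodD3[OF gh' this oA] have "T pl (Suc (m - 1)) ?o - spr (\<sigma> (pl ! (m - 1))) b pl h' ?o = S pl (m - 1)"
        using lh by simp
      then show ?thesis using False lph by simp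
    qed
    have Sst: "S pl (m - 1) = avg A u i + S pl m" using S_step[of "m - 1" pl] False m by simp
    have ch: "cont_payoff n u \<sigma> b pl h i = T pl m ?o - lp h ?o - S pl m + bid_transfer n b pl i"
      using goodD2[OF gh] lh o_eq m by simp
    have ne: "i \<noteq> hd pl" using orders_inj[OF pl, of m 0] m False n2 hd0 by auto
    have bt: "bid_transfer n b pl i = Bm b / real (n - 1)" using ne winner_bid[OF plW] by (simp add: bid_transfer_def)
    have "cont_payoff n u \<sigma> b pl [] i = T pl m ?o - lp h ?o - S pl m + bid_transfer n b pl i"
      using c_eq ch by simp
    also have "\<dots> = S pl (m - 1) - S pl m + bid_transfer n b pl i" using c3 by simp
    also have "\<dots> = avg A u i + Bm b / real (n - 1)" using Sst bt by simp
    finally have "cont_payoff n u \<sigma> b pl [] i = avg A u i + Bm b / real (n - 1)" .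
    then show ?thesis using ne by simp
  qed
qed

lemma exp_formula:
  assumes sg: "SG \<sigma>" and vp: "valid_profile n A \<sigma>" and vb: "valid_bids n b" and i: "i < n"
  shows "exp_payoff n u \<sigma> b i = Fm b i"
proof -
  have n0: "0 < n" using n2 by simp
  define G where "G j = avg A u i + (if i = j then E - Bm b else Bm b / real (n - 1))" for j
  have "(\<Sum>pl\<in>orders_W n b. cont_payoff n u \<sigma> b pl [] i) = (\<Sum>pl\<in>orders_W n b. G (hd pl))"
    using path_payoff(1)[OF sg vp vb _ i] by (intro sum.cong) (auto simp: G_def)
  also have "\<dots> = real (fact (n - 1)) * (\<Sum>j\<in>winners n b. G j)" by (rule count_sum[OF n0])
  finally have s: "(\<Sum>pl\<in>orders_W n b. cont_payoff n u \<sigma> b pl [] i) = real (fact (n - 1)) * (\<Sum>j\<in>winners n b. G j)" .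
  have cw: "0 < card (winners n b)" using winners_ne[OF n0] winners_fin by (simp add: card_gt_0_iff)
  have ex: "exp_payoff n u \<sigma> b i = (\<Sum>j\<in>winners n b. G j) / real (card (winners n b))"
    unfolding exp_payoff_def s card_OW[OF n0] by simp
  show ?thesis
  proof (cases "i \<in> winners n b")
    case True
    have "(\<Sum>j\<in>winners n b. G j) = G i + (\<Sum>j\<in>winners n b - {i}. G j)"
      using True winners_fin by (simp add: sum.remove)
    also have "(\<Sum>j\<in>winners n b - {i}. G j) = (\<Sum>j\<in>winners n b - {i}. avg A u i + Bm b / real (n - 1))"
      by (intro sum.cong) (auto simp: G_def)
    also have "\<dots> = (real (card (winners n b)) - 1) * (avg A u i + Bm b / real (n - 1))"
      using True winners_fin cw by (simp add: of_nat_diff)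
    finally have "(\<Sum>j\<in>winners n b. G j) = real (card (winners n b)) * avg A u i
        + (E - Bm b + (real (card (winners n b)) - 1) * Bm b / real (n - 1))"
      by (simp add: G_def algebra_simps)
    then have "(\<Sum>j\<in>winners n b. G j) / real (card (winners n b)) = avg A u i
        + (E - Bm b + (real (card (winners n b)) - 1) * Bm b / real (n - 1)) / real (card (winners n b))"
      using cw by (simp add: add_divide_distrib)
    then show ?thesis using ex True by (simp add: Fm_def)
  next
    case False
    have "(\<Sum>j\<in>winners n b. G j) = (\<Sum>j\<in>winners n b. avg A u i + Bm b / real (n - 1))"
      using False by (intro sum.cong) (auto simp: G_def)
    then show ?thesis using ex False cw by (simp add: Fm_def)
  qed
qed

end


lemma upd_image: "i < n \<Longrightarrow> (b(i := \<beta>)) ` {..<n} = insert \<beta> (b ` ({..<n} - {i}))"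
proof -
  assume i: "i < n"
  have "{..<n} = insert i ({..<n} - {i})" using i by auto
  then have "(b(i := \<beta>)) ` {..<n} = insert \<beta> ((b(i := \<beta>)) ` ({..<n} - {i}))" by (metis fun_upd_same image_insert)
  also have "(b(i := \<beta>)) ` ({..<n} - {i}) = b ` ({..<n} - {i})" by (intro image_cong) auto
  finally show ?thesis .
qed

context bpc begin

definition Mo :: "(nat \<Rightarrow> real) \<Rightarrow> nat \<Rightarrow> real" where
  "Mo b i = Max (b ` ({..<n} - {i}))"

lemma others_ne: "i < n \<Longrightarrow> {..<n} - {i} \<noteq> {}"
proof -
  assume i: "i < n"
  have "(if i = 0 then 1 else 0) \<in> {..<n} - {i}" using n2 i by auto
  then show ?thesis by blast
qed

lemma Mo_ge: "i < n \<Longrightarrow> j < n \<Longrightarrow> j \<noteq> i \<Longrightarrow> b j \<le> Mo b i"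
  unfolding Mo_def by (intro Max_ge) auto

lemma Mo_in: "i < n \<Longrightarrow> \<exists>j<n. j \<noteq> i \<and> b j = Mo b i"
proof -
  assume i: "i < n"
  have "Mo b i \<in> b ` ({..<n} - {i})" unfolding Mo_def using others_ne[OF i] by (intro Max_in) auto
  then show ?thesis by auto
qed

lemma Bm_upd: "i < n \<Longrightarrow> Bm (b(i := \<beta>)) = max \<beta> (Mo b i)"
proof -
  assume i: "i < n"
  have "Bm (b(i := \<beta>)) = Max (insert \<beta> (b ` ({..<n} - {i})))"
    unfolding Bm_def using upd_image[OF i] by metis
  also have "\<dots> = max \<beta> (Max (b ` ({..<n} - {i})))"
    using others_ne[OF i] by (intro Max_insert) auto
  finally show ?thesis by (simp add: Mo_def)
qed

lemma upd_high:
  assumes i: "i < n" and h: "Mo b i < \<beta>"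
  shows "Bm (b(i := \<beta>)) = \<beta>" and "winners n (b(i := \<beta>)) = {i}"
proof -
  show B: "Bm (b(i := \<beta>)) = \<beta>" using Bm_upd[OF i] h by simp
  show "winners n (b(i := \<beta>)) = {i}"
  proof (intro equalityI subsetI)
    fix j assume j: "j \<in> winners n (b(i := \<beta>))"
    then have jn: "j < n" and bj: "(b(i := \<beta>)) j = \<beta>" using B by (auto simp: winners_def Bm_def)
    show "j \<in> {i}"
    proof (rule ccontr)
      assume "j \<notin> {i}"
      then have "b j = \<beta>" "b j \<le> Mo b i" using bj Mo_ge[OF i jn] by auto
      then show False using h by simp
    qed
  next
    fix j assume "j \<in> {i}"
    then show "j \<in> winners n (b(i := \<beta>))" using i B by (auto simp: winners_def Bm_def)
  qed
qed

lemma upd_low: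
  assumes i: "i < n" and h: "\<beta> < Mo b i"
  shows "Bm (b(i := \<beta>)) = Mo b i" and "i \<notin> winners n (b(i := \<beta>))"
proof -
  show B: "Bm (b(i := \<beta>)) = Mo b i" using Bm_upd[OF i] h by simp
  show "i \<notin> winners n (b(i := \<beta>))" using B h by (auto simp: winners_def Bm_def)
qed

lemma Fm_sole: "winners n b = {i} \<Longrightarrow> Fm b i = avg A u i + (E - Bm b)"
  by (simp add: Fm_def)

lemma Fm_non: "i \<notin> winners n b \<Longrightarrow> Fm b i = avg A u i + Bm b / real (n - 1)"
  by (simp add: Fm_def)

lemma SPE_SG: "SPE n A u \<sigma> \<Longrightarrow> SG \<sigma>"
  unfolding SPE_def SG_def by blast

lemma SPE_vp: "SPE n A u \<sigma> \<Longrightarrow> valid_profile n A \<sigma>"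
  unfolding SPE_def by blast

lemma valid_bids_of: "valid_profile n A \<sigma> \<Longrightarrow> valid_bids n (bids_of n \<sigma>)"
  unfolding valid_bids_def bids_of_def valid_profile_def valid_strat_def by auto

lemma valid_bids_upd: "valid_bids n b \<Longrightarrow> 0 \<le> \<beta> \<Longrightarrow> i < n \<Longrightarrow> valid_bids n (b(i := \<beta>))"
  unfolding valid_bids_def by auto

lemma root_eq: "SPE n A u \<sigma> \<Longrightarrow> i < n \<Longrightarrow> root_payoff n u \<sigma> i = Fm (bids_of n \<sigma>) i"
  unfolding root_payoff_def
  by (rule exp_formula[OF SPE_SG SPE_vp valid_bids_of[OF SPE_vp]])

lemma devb:
  assumes spe: "SPE n A u \<sigma>" and i: "i < n" and \<beta>: "0 \<le> \<beta>"
  shows "Fm ((bids_of n \<sigma>)(i := \<beta>)) i \<le> Fm (bids_of n \<sigma>) i"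
proof -
  have vp: "valid_profile n A \<sigma>" by (rule SPE_vp[OF spe])
  define s where "s = (\<sigma> i)\<lparr>sbid := \<beta>\<rparr>"
  have vs: "valid_strat A s" using valid_strat_of[OF vp i] \<beta> by (simp add: s_def valid_strat_def)
  have rc: "root_payoff n u (\<sigma>(i := s)) i \<le> root_payoff n u \<sigma> i"
    using spe vs i unfolding SPE_def by blast
  have bo: "bids_of n (\<sigma>(i := s)) = (bids_of n \<sigma>)(i := \<beta>)"
    using i by (auto simp: bids_of_def s_def)
  have ce: "exp_payoff n u (\<sigma>(i := s)) = exp_payoff n u \<sigma>"
    by (rule cong_exp) (auto simp: s_def)
  have vb: "valid_bids n ((bids_of n \<sigma>)(i := \<beta>))"
    by (rule valid_bids_upd[OF valid_bids_of[OF vp] \<beta> i])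
  have "root_payoff n u (\<sigma>(i := s)) i = Fm ((bids_of n \<sigma>)(i := \<beta>)) i"
    unfolding root_payoff_def bo ce by (rule exp_formula[OF SPE_SG[OF spe] vp vb i])
  then show ?thesis using rc root_eq[OF spe i] by simp
qed

lemma bids_nonneg: "valid_bids n b \<Longrightarrow> 0 \<le> b j"
  unfolding valid_bids_def by (cases "j < n") auto

lemma spe_payoff:
  assumes spe: "SPE n A u \<sigma>" and i: "i < n"
  shows "root_payoff n u \<sigma> i = avg A u i + Bm (bids_of n \<sigma>) / real (n - 1)"
proof -
  define b where "b = bids_of n \<sigma>"
  have vb: "valid_bids n b" unfolding b_def by (rule valid_bids_of[OF SPE_vp[OF spe]])
  define B where "B = Bm b"
  define w where "w = card (winners n b)"
  have n0: "0 < n" using n2 by simp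
  have wne: "winners n b \<noteq> {}" by (rule winners_ne[OF n0])
  have w1: "1 \<le> w" using wne winners_fin unfolding w_def by (simp add: Suc_leI card_gt_0_iff)
  have win: "\<And>j. j \<in> winners n b \<longleftrightarrow> j < n \<and> b j = B" by (simp add: winners_def B_def Bm_def)
  have leB: "\<And>j. j < n \<Longrightarrow> b j \<le> B" unfolding B_def Bm_def by (intro Max_ge) auto
  have n1: "0 < real (n - 1)" using n2 by simp
  have w2: "2 \<le> w"
  proof (rule ccontr)
    assume "\<not> 2 \<le> w"
    then have "w = 1" using w1 by simp
    then obtain i0 where W: "winners n b = {i0}" using card_1_singletonE unfolding w_def by blast
    then have i0: "i0 < n" "b i0 = B" using win by auto
    have MoB: "Mo b i0 < B"
    proof -
      obtain j where j: "j < n" "j \<noteq> i0" "b j = Mo b i0" using Mo_in[OF i0(1)] by blast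
      have "j \<notin> winners n b" using W j by auto
      then show ?thesis using j leB[OF j(1)] win by force
    qed
    have Mo0: "0 \<le> Mo b i0" using Mo_in[OF i0(1), of b] bids_nonneg[OF vb] by metis
    define \<beta> where "\<beta> = (Mo b i0 + B) / 2"
    have bh: "Mo b i0 < \<beta>" "\<beta> < B" "0 \<le> \<beta>" using MoB Mo0 by (auto simp: \<beta>_def)
    have "Fm (b(i0 := \<beta>)) i0 = avg A u i0 + (E - \<beta>)"
      using Fm_sole[OF upd_high(2)[OF i0(1) bh(1)]] upd_high(1)[OF i0(1) bh(1)] by simp
    moreover have "Fm b i0 = avg A u i0 + (E - B)" using Fm_sole[OF W] by (simp add: B_def)
    moreover have "Fm (b(i0 := \<beta>)) i0 \<le> Fm b i0" using devb[OF spe i0(1) bh(3)] by (simp add: b_def)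
    ultimately show False using bh by simp
  qed
  define P where "P = (E - B + (real w - 1) * B / real (n - 1)) / real w"
  define c where "c = B / real (n - 1)"
  have wpos: "0 < real w" using w1 by simp
  have Pc: "P = c" if iW: "i \<in> winners n b" and iN: "i < n" for i
  proof -
    have FmW: "Fm b i = avg A u i + P" using iW by (simp add: Fm_def P_def B_def w_def)
    have MoEq: "Mo b i = B"
    proof -
      obtain j where j: "j \<in> winners n b" "j \<noteq> i"
      proof -
        have "winners n b \<noteq> {i}" using w2 unfolding w_def by auto
        then show ?thesis using that iW by blast
      qed
      have "b j \<le> Mo b i" using Mo_ge[OF iN _ j(2)] j(1) win by auto
      moreover obtain j' where "j' < n" "j' \<noteq> i" "b j' = Mo b i" using Mo_in[OF iN] by blast
      ultimately show ?thesis using win j leB by force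
    qed
    have up: "E - B \<le> P"
    proof (rule eps_le[where c = 1])
      fix e :: real assume e: "0 < e"
      have h: "Mo b i < B + e" using MoEq e by simp
      have B0: "0 \<le> B" using leB[OF iN] bids_nonneg[OF vb, of i] by simp
      have "Fm (b(i := B + e)) i = avg A u i + (E - (B + e))"
        using Fm_sole[OF upd_high(2)[OF iN h]] upd_high(1)[OF iN h] by simp
      moreover have "Fm (b(i := B + e)) i \<le> Fm b i" using devb[OF spe iN, of "B + e"] B0 e by (simp add: b_def)
      ultimately show "E - B - e * 1 \<le> P" using FmW by simp
    qed simp
    have down: "c \<le> P"
    proof (cases "0 < B")
      case True
      have h: "0 < Mo b i" using MoEq True by simp
      have "Fm (b(i := 0)) i = avg A u i + c"
        using Fm_non[OF upd_low(2)[OF iN h]] upd_low(1)[OF iN h] MoEq by (simp add: c_def)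
      moreover have "Fm (b(i := 0)) i \<le> Fm b i" using devb[OF spe iN, of 0] by (simp add: b_def)
      ultimately show ?thesis using FmW by simp
    next
      case False
      then have "B = 0" using leB[OF iN] bids_nonneg[OF vb, of i] by simp
      then show ?thesis using E_nonneg wpos by (simp add: P_def c_def)
    qed
    have Pw: "P * real w = E - B + (real w - 1) * c" using wpos by (simp add: P_def c_def)
    have a1: "real w * (E - B) \<le> E - B + (real w - 1) * c"
      using mult_left_mono[OF up, of "real w"] wpos Pw by (simp add: mult.commute)
    have a2: "real w * c \<le> E - B + (real w - 1) * c"
      using mult_left_mono[OF down, of "real w"] wpos Pw by (simp add: mult.commute)
    have "(real w - 1) * (E - B) \<le> (real w - 1) * c" using a1 by (simp add: algebra_simps)
    then have "E - B \<le> c" using w2 by simp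
    moreover have "c \<le> E - B" using a2 by (simp add: algebra_simps)
    ultimately have "E - B = c" by simp
    then have "P * real w = c * real w" using Pw by (simp add: algebra_simps)
    then show "P = c" using wpos by simp
  qed
  show ?thesis
  proof (cases "i \<in> winners n b")
    case True
    then show ?thesis using Pc[OF True i] root_eq[OF spe i]
      by (simp add: Fm_def P_def B_def w_def c_def b_def)
  next
    case False
    then show ?thesis using root_eq[OF spe i] Fm_non[OF False] by (simp add: b_def)
  qed
qed

lemma part_ii: "SPE n A u \<sigma> \<Longrightarrow> i < n \<Longrightarrow> j < n \<Longrightarrow>
   root_payoff n u \<sigma> i - root_payoff n u \<sigma> j = avg A u i - avg A u j"
  using spe_payoff[of \<sigma> i] spe_payoff[of \<sigma> j] by simp

lemma part_i1: "SPE n A u \<sigma> \<Longrightarrow> pl \<in> orders_W n (bids_of n \<sigma>) \<Longrightarrow> efficient n A u (realized n \<sigma> pl)"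
proof -
  assume spe: "SPE n A u \<sigma>" and pl: "pl \<in> orders_W n (bids_of n \<sigma>)"
  have "0 < n" using n2 by simp
  then show ?thesis unfolding realized_def
    using path_payoff(2)[OF SPE_SG[OF spe] SPE_vp[OF spe] valid_bids_of[OF SPE_vp[OF spe]] pl] by blast
qed

end


context bpc begin

definition dv :: "nat list \<Rightarrow> ('a \<Rightarrow> real) list \<Rightarrow> nat set" where
  "dv pl ps = {j. j < length ps \<and> ps ! j \<noteq> canon pl j}"

definition ch :: "'a \<Rightarrow> nat list \<Rightarrow> ('a \<Rightarrow> real) list \<Rightarrow> 'a" where
  "ch a pl ps = (if dv pl ps = {} then a else
     (SOME x. x \<in> A \<and> (\<forall>y\<in>A. T pl (Suc (Max (dv pl ps))) y - (ps ! Max (dv pl ps)) y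
                              \<le> T pl (Suc (Max (dv pl ps))) x - (ps ! Max (dv pl ps)) x)))"

definition Bstar :: real where "Bstar = real (n - 1) * E / real n"

definition sig :: "'a \<Rightarrow> nat \<Rightarrow> 'a strat" where
  "sig a = (\<lambda>i. \<lparr>sbid = Bstar, spr = (\<lambda>b pl ps. canon pl (length ps)), sch = (\<lambda>b pl ps. ch a pl ps)\<rparr>)"

lemma dv_fin: "finite (dv pl ps)" unfolding dv_def by simp

lemma ch_prop:
  assumes "dv pl ps \<noteq> {}"
  shows "ch a pl ps \<in> A \<and> (\<forall>y\<in>A. T pl (Suc (Max (dv pl ps))) y - (ps ! Max (dv pl ps)) y
                              \<le> T pl (Suc (Max (dv pl ps))) (ch a pl ps) - (ps ! Max (dv pl ps)) (ch a pl ps))"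
proof -
  let ?f = "\<lambda>y. T pl (Suc (Max (dv pl ps))) y - (ps ! Max (dv pl ps)) y"
  have "\<exists>x. x \<in> A \<and> (\<forall>y\<in>A. ?f y \<le> ?f x)" using ex_argmax[OF finA neA, of ?f] by blast
  then have "(SOME x. x \<in> A \<and> (\<forall>y\<in>A. ?f y \<le> ?f x)) \<in> A \<and> (\<forall>y\<in>A. ?f y \<le> ?f (SOME x. x \<in> A \<and> (\<forall>y\<in>A. ?f y \<le> ?f x)))"
    by (rule someI_ex)
  then show ?thesis using assms unfolding ch_def by simp
qed

lemma Bstar_nonneg: "0 \<le> Bstar" using E_nonneg n2 by (simp add: Bstar_def)

lemma sig_valid: "efficient n A u a \<Longrightarrow> valid_profile n A (sig a)"
  unfolding valid_profile_def valid_strat_def sig_def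
  using Bstar_nonneg canon_P ch_prop by (auto simp: efficient_def ch_def)

lemma sig_ext: "ext_prices (sig a) b pl m ps = ps @ map (canon pl) [length ps..<length ps + m]"
proof (induction m arbitrary: ps)
  case 0 then show ?case by simp
next
  case (Suc m)
  have "ext_prices (sig a) b pl (Suc m) ps = ext_prices (sig a) b pl m (ps @ [canon pl (length ps)])"
    by (simp add: sig_def)
  also have "\<dots> = ps @ [canon pl (length ps)] @ map (canon pl) [Suc (length ps)..<Suc (length ps) + m]"
    using Suc.IH by simp
  also have "[length ps..<length ps + Suc m] = length ps # [Suc (length ps)..<Suc (length ps) + m]"
    by (simp add: upt_conv_Cons)
  then have "ps @ [canon pl (length ps)] @ map (canon pl) [Suc (length ps)..<Suc (length ps) + m]
      = ps @ map (canon pl) [length ps..<length ps + Suc m]" by simp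
  finally show ?case .
qed

lemma sig_fin_nth:
  assumes "length ps \<le> n - 1" "j < n - 1"
  shows "final_prices n (sig a) b pl ps ! j = (if j < length ps then ps ! j else canon pl j)"
proof -
  have f: "final_prices n (sig a) b pl ps = ps @ map (canon pl) [length ps..<n - 1]"
    unfolding final_prices_def sig_ext using assms by simp
  show ?thesis unfolding f using assms by (auto simp: nth_append)
qed

lemma sig_dv:
  assumes "length ps \<le> n - 1"
  shows "dv pl (final_prices n (sig a) b pl ps) = dv pl ps"
  unfolding dv_def using sig_fin_nth[OF assms] fin_len[OF assms] assms by auto

lemma sig_out: "outcome_opt n (sig a) b pl ps = ch a pl (final_prices n (sig a) b pl ps)"
  by (simp add: outcome_opt_def sig_def)

lemma goodc:
  assumes a: "efficient n A u a" and pl: "pl \<in> orders n" and L: "length ps \<le> n - 1"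
  shows "outcome_opt n (sig a) b pl ps \<in> A \<and>
    (\<forall>y\<in>A. T pl (length ps) y - lp ps y \<le> T pl (length ps) (outcome_opt n (sig a) b pl ps) - lp ps (outcome_opt n (sig a) b pl ps))"
proof -
  let ?f = "final_prices n (sig a) b pl ps"
  let ?o = "outcome_opt n (sig a) b pl ps"
  have oA: "?o \<in> A" by (rule out_in_A[OF sig_valid[OF a] pl])
  have const: "\<forall>y\<in>A. T pl (length ps) y - lp ps y = S pl (length ps - 1)"
    if "0 < length ps" "length ps - 1 \<notin> dv pl ps"
  proof -
    have "lp ps = canon pl (length ps - 1)" using that lp_last[of ps] by (auto simp: dv_def)
    then show ?thesis using that by (simp add: canon_def)
  qed
  show ?thesis
  proof (cases "dv pl ps = {}")
    case True
    then have o: "?o = a" using sig_dv[OF L] by (simp add: sig_out ch_def)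
    show ?thesis
    proof (cases "length ps = 0")
      case True
      then show ?thesis using o a T0[OF pl] by (simp add: lp_def efficient_def)
    next
      case False
      then show ?thesis using const \<open>dv pl ps = {}\<close> oA by simp
    qed
  next
    case False
    define J where "J = Max (dv pl ps)"
    have Jin: "J \<in> dv pl ps" using False dv_fin by (simp add: J_def)
    have JL: "J < length ps" using Jin by (simp add: dv_def)
    have fJ: "?f ! J = ps ! J" using fin_nth_old[OF JL] .
    have cp: "\<forall>y\<in>A. T pl (Suc J) y - (ps ! J) y \<le> T pl (Suc J) ?o - (ps ! J) ?o"
      using ch_prop[of pl ?f a] sig_dv[OF L] False fJ by (simp add: sig_out J_def)
    show ?thesis
    proof (cases "J = length ps - 1")
      case True
      have "ps \<noteq> []" using JL by auto
      then have "lp ps = ps ! J" using True lp_last[of ps] by simp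
      moreover have "Suc J = length ps" using True JL by simp
      ultimately show ?thesis using cp oA by simp
    next
      case False
      have "length ps - 1 \<notin> dv pl ps"
      proof
        assume "length ps - 1 \<in> dv pl ps"
        then have "length ps - 1 \<le> J" using dv_fin by (simp add: J_def)
        then show False using False JL by simp
      qed
      moreover have "0 < length ps" using JL by linarith
      ultimately have "\<forall>y\<in>A. T pl (length ps) y - lp ps y = S pl (length ps - 1)" using const by blast
      then show ?thesis using oA by simp
    qed
  qed
qed

lemma sig_own:
  assumes a: "efficient n A u a" and pl: "pl \<in> orders n" and L: "length ps \<le> n - 1"
  shows "cont_payoff n u (sig a) b pl ps (pl ! length ps) =
     T pl (length ps) (outcome_opt n (sig a) b pl ps) - lp ps (outcome_opt n (sig a) b pl ps)
       - S pl (length ps) + bid_transfer n b pl (pl ! length ps)"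
proof -
  let ?o = "outcome_opt n (sig a) b pl ps"
  have oA: "?o \<in> A" using goodc[OF a pl L] by blast
  have ow: "cont_payoff n u (sig a) b pl ps (pl ! length ps) = u (pl ! length ps) ?o - lp ps ?o
     + (if length ps < n - 1 then canon pl (length ps) ?o else 0) + bid_transfer n b pl (pl ! length ps)"
    using own[OF pl refl L, of "sig a" b] by (simp add: sig_def)
  show ?thesis
  proof (cases "length ps < n - 1")
    case True
    then show ?thesis using ow oA T_step[of "length ps" pl ?o] by (simp add: canon_def)
  next
    case False
    then have "length ps = n - 1" using L by simp
    then show ?thesis using ow T_last S_last by simp
  qed
qed

lemma sig_mover:
  assumes a: "efficient n A u a" and pl: "pl \<in> orders n" and L: "length ps \<le> n - 1"
    and s: "valid_strat A s"
  shows "cont_payoff n u ((sig a)(pl ! length ps := s)) b pl ps (pl ! length ps)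
       \<le> cont_payoff n u (sig a) b pl ps (pl ! length ps)"
proof -
  let ?o = "outcome_opt n (sig a) b pl ps"
  let ?L = "length ps"
  let ?bt = "bid_transfer n b pl (pl ! ?L)"
  have g: "\<forall>y\<in>A. T pl ?L y - lp ps y \<le> T pl ?L ?o - lp ps ?o" using goodc[OF a pl L] by blast
  show ?thesis
  proof (cases "?L < n - 1")
    case True
    define q where "q = spr s b pl ps"
    have qP: "q \<in> Pset A" using s by (simp add: valid_strat_def q_def)
    let ?o' = "outcome_opt n (sig a) b pl (ps @ [q])"
    have d: "cont_payoff n u ((sig a)(pl ! ?L := s)) b pl ps (pl ! ?L) = u (pl ! ?L) ?o' - lp ps ?o' + q ?o' + ?bt"
      using dev[OF pl refl True, of "sig a" s b] own_prev[OF pl refl True, of "sig a" b q] by (simp add: q_def)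
    have g': "?o' \<in> A \<and> (\<forall>y\<in>A. T pl (Suc ?L) y - q y \<le> T pl (Suc ?L) ?o' - q ?o')"
      using goodc[OF a pl, of "ps @ [q]" b] True by (simp add: lp_def)
    have "q ?o' \<le> T pl (Suc ?L) ?o' - S pl ?L" using key_ineq[OF qP] g' by blast
    then have "cont_payoff n u ((sig a)(pl ! ?L := s)) b pl ps (pl ! ?L) \<le> T pl ?L ?o' - lp ps ?o' - S pl ?L + ?bt"
      using d T_step[of ?L pl ?o'] True by simp
    also have "\<dots> \<le> T pl ?L ?o - lp ps ?o - S pl ?L + ?bt" using g g' by simp
    finally show ?thesis using sig_own[OF a pl L, of b] by simp
  next
    case False
    then have Ln: "?L = n - 1" using L by simp
    let ?s' = "(sig a)(pl ! ?L := s)"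
    have o'': "outcome_opt n ?s' b pl ps = sch s b pl ps" using Ln fin_full[OF Ln] by (simp add: outcome_opt_def)
    have xA: "sch s b pl ps \<in> A" using s by (simp add: valid_strat_def)
    have "cont_payoff n u ?s' b pl ps (pl ! ?L) = u (pl ! ?L) (sch s b pl ps) - lp ps (sch s b pl ps) + ?bt"
      using own[OF pl refl L, of ?s' b] o'' Ln by simp
    also have "\<dots> \<le> u (pl ! ?L) ?o - lp ps ?o + ?bt" using g xA Ln T_last by simp
    also have "\<dots> = cont_payoff n u (sig a) b pl ps (pl ! ?L)" using sig_own[OF a pl L, of b] Ln T_last S_last by simp
    finally show ?thesis .
  qed
qed

lemma sig_SG_gen:
  assumes a: "efficient n A u a" and pl: "pl \<in> orders n" and L: "length ps \<le> n - 1"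
    and sP: "set ps \<subseteq> Pset A" and i: "i < n" and s: "valid_strat A s"
  shows "cont_payoff n u ((sig a)(i := s)) b pl ps i \<le> cont_payoff n u (sig a) b pl ps i"
proof -
  obtain m where m: "m < n" "pl ! m = i" using orders_pos[OF pl i] by blast
  show ?thesis
  proof (cases "m < length ps")
    case True
    then show ?thesis using irr[OF pl True L, of "sig a" s b i] m by simp
  next
    case False
    define h where "h = ext_prices (sig a) b pl (m - length ps) ps"
    have lh: "length h = m" using False by (simp add: h_def)
    have r: "ext_prices ((sig a)(pl ! m := s)) b pl (m - length ps) ps = h"
      using reach[OF pl _ m(1), of ps "sig a" s b] False by (simp add: h_def)
    have c1: "cont_payoff n u ((sig a)(i := s)) b pl ps i = cont_payoff n u ((sig a)(i := s)) b pl h i"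
      using cont_shift[of ps "m - length ps" "(sig a)(i := s)" b pl i] r m False by simp
    have c2: "cont_payoff n u (sig a) b pl ps i = cont_payoff n u (sig a) b pl h i"
      using cont_shift[of ps "m - length ps" "sig a" b pl i] m False by (simp add: h_def)
    have "cont_payoff n u ((sig a)(pl ! length h := s)) b pl h (pl ! length h)
        \<le> cont_payoff n u (sig a) b pl h (pl ! length h)"
      using sig_mover[OF a pl _ s, of h b] lh m by simp
    then show ?thesis using c1 c2 lh m by simp
  qed
qed

lemma SG_chance:
  assumes sg: "SG \<sigma>" and vb: "valid_bids n b" and i: "i < n" and s: "valid_strat A s"
  shows "exp_payoff n u (\<sigma>(i := s)) b i \<le> exp_payoff n u \<sigma> b i"
proof -
  have "(\<Sum>pl\<in>orders_W n b. cont_payoff n u (\<sigma>(i := s)) b pl [] i) \<le> (\<Sum>pl\<in>orders_W n b. cont_payoff n u \<sigma> b pl [] i)"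
    using sg vb i s unfolding SG_def by (intro sum_mono) auto
  then show ?thesis unfolding exp_payoff_def by (rule divide_right_mono) simp
qed

end


context bpc begin

lemma sig_SG: "efficient n A u a \<Longrightarrow> SG (sig a)"
  unfolding SG_def using sig_SG_gen orders_W_orders by blast

lemma sig_bids: "bids_of n (sig a) = (\<lambda>j. if j < n then Bstar else 0)"
  by (auto simp: bids_of_def sig_def)

lemma sig_root:
  assumes a: "efficient n A u a" and i: "i < n" and s: "valid_strat A s"
  shows "root_payoff n u ((sig a)(i := s)) i \<le> root_payoff n u (sig a) i"
proof -
  define b0 where "b0 = bids_of n (sig a)"
  have b0v: "\<And>j. j < n \<Longrightarrow> b0 j = Bstar" by (simp add: b0_def sig_bids)
  have vp: "valid_profile n A (sig a)" by (rule sig_valid[OF a])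
  have sg: "SG (sig a)" by (rule sig_SG[OF a])
  define \<beta> where "\<beta> = sbid s"
  have \<beta>0: "0 \<le> \<beta>" using s by (simp add: valid_strat_def \<beta>_def)
  have bo: "bids_of n ((sig a)(i := s)) = b0(i := \<beta>)"
    using i by (auto simp: bids_of_def b0_def \<beta>_def)
  have vb0: "valid_bids n b0" unfolding b0_def by (rule valid_bids_of[OF vp])
  have vb: "valid_bids n (b0(i := \<beta>))" by (rule valid_bids_upd[OF vb0 \<beta>0 i])
  have "root_payoff n u ((sig a)(i := s)) i = exp_payoff n u ((sig a)(i := s)) (b0(i := \<beta>)) i"
    unfolding root_payoff_def bo ..
  also have "\<dots> \<le> exp_payoff n u (sig a) (b0(i := \<beta>)) i" by (rule SG_chance[OF sg vb i s])
  also have "\<dots> = Fm (b0(i := \<beta>)) i" by (rule exp_formula[OF sg vp vb i])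
  finally have r1: "root_payoff n u ((sig a)(i := s)) i \<le> Fm (b0(i := \<beta>)) i" .
  have r0: "root_payoff n u (sig a) i = Fm b0 i"
    unfolding root_payoff_def b0_def by (rule exp_formula[OF sg vp valid_bids_of[OF vp] i])
  have img: "b0 ` {..<n} = {Bstar}"
  proof -
    have "b0 ` {..<n} \<subseteq> {Bstar}" using b0v by auto
    moreover have "0 < n" using n2 by simp
    then have "Bstar \<in> b0 ` {..<n}" using b0v[of 0] by (metis image_eqI lessThan_iff)
    ultimately show ?thesis by auto
  qed
  have Bm0: "Bm b0 = Bstar" by (simp add: Bm_def img)
  have MaxB: "Max (b0 ` {..<n}) = Bstar" by (simp add: img)
  have W0: "winners n b0 = {..<n}" unfolding winners_def MaxB using b0v by auto
  have n1: "0 < real (n - 1)" using n2 by simp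
  have nr: "real (n - 1) = real n - 1" using n2 by simp
  have EB: "E - Bstar = E / real n" using n2 by (simp add: Bstar_def nr field_simps)
  have Bc: "Bstar / real (n - 1) = E / real n" using n1 by (simp add: Bstar_def)
  have F0: "Fm b0 i = avg A u i + E / real n"
  proof -
    have "(E - Bstar + (real n - 1) * Bstar / real (n - 1)) / real n = E / real n"
      using n1 nr by (simp add: Bstar_def)
    then show ?thesis using i by (simp add: Fm_def W0 Bm0)
  qed
  obtain j where j: "j < n" "j \<noteq> i" "b0 j = Mo b0 i" using Mo_in[OF i] by blast
  have Mo0: "Mo b0 i = Bstar" using j b0v by simp
  have "Fm (b0(i := \<beta>)) i \<le> Fm b0 i"
  proof (cases "\<beta> = Bstar")
    case True
    have "b0(i := \<beta>) = b0" using True b0v[OF i] by auto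
    then show ?thesis by simp
  next
    case False
    show ?thesis
    proof (cases "Bstar < \<beta>")
      case True
      then have h: "Mo b0 i < \<beta>" using Mo0 by simp
      have "Fm (b0(i := \<beta>)) i = avg A u i + (E - \<beta>)"
        using Fm_sole[OF upd_high(2)[OF i h]] upd_high(1)[OF i h] by simp
      then show ?thesis using F0 EB True by simp
    next
      case False2: False
      then have h: "\<beta> < Mo b0 i" using Mo0 False by simp
      have "Fm (b0(i := \<beta>)) i = avg A u i + Bstar / real (n - 1)"
        using Fm_non[OF upd_low(2)[OF i h]] upd_low(1)[OF i h] Mo0 by simp
      then show ?thesis using F0 Bc by simp
    qed
  qed
  then show ?thesis using r1 r0 by simp
qed

lemma sig_SPE: "efficient n A u a \<Longrightarrow> SPE n A u (sig a)"
proof -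
  assume a: "efficient n A u a"
  have vp: "valid_profile n A (sig a)" by (rule sig_valid[OF a])
  have sg: "SG (sig a)" by (rule sig_SG[OF a])
  show ?thesis unfolding SPE_def
    using vp sig_root[OF a] SG_chance[OF sg] sg[unfolded SG_def] by blast
qed

lemma sig_realized: "efficient n A u a \<Longrightarrow> realized n (sig a) pl = a"
proof -
  assume a: "efficient n A u a"
  have "dv pl (final_prices n (sig a) (bids_of n (sig a)) pl []) = {}"
    using sig_dv[where ps="[]" and a=a and b="bids_of n (sig a)" and pl=pl] by (simp add: dv_def)
  then show ?thesis unfolding realized_def sig_out by (simp add: ch_def)
qed

end

theorem proposition5:
  fixes n :: nat and A :: "'a set" and u :: "nat \<Rightarrow> 'a \<Rightarrow> real"
  assumes "n \<ge> 2" and "finite A" and "A \<noteq> {}"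
  shows "(\<forall>\<sigma>. SPE n A u \<sigma> \<longrightarrow>
            (\<forall>pi\<in>orders_W n (bids_of n \<sigma>). efficient n A u (realized n \<sigma> pi)))
       \<and> (\<forall>a. efficient n A u a \<longrightarrow>
            (\<exists>\<sigma>. SPE n A u \<sigma> \<and> (\<forall>pi\<in>orders_W n (bids_of n \<sigma>). realized n \<sigma> pi = a)))
       \<and> (\<forall>\<sigma>. SPE n A u \<sigma> \<longrightarrow>
            (\<forall>i<n. \<forall>j<n. root_payoff n u \<sigma> i - root_payoff n u \<sigma> j = avg A u i - avg A u j))"
proof -
  interpret bpc n A u using assms by unfold_locales
  show ?thesis
    using part_i1 part_ii sig_SPE sig_realized by blast
qed

end
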